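(* There is no injective algebra homomorphism from $\mathbb{C}[[X_1,X_2,\dots]]$ into $\mathbb{C}[[X]]$; in particular, there is no topological (i.e. continuous, injective, homeomorphic-onto-image) algebra embedding of $\mathbb{C}[[X_1,X_2,\dots]]$ into $\mathbb{C}[[X]]$.
   Context: $\mathbb{C}[[X_1,X_2,\dots]]$ denotes the algebra of all formal power series in countably many commuting indeterminates $X_1,X_2,\dots$ with complex coefficients, i.e. formal sums $\sum_{r}\lambda_r X^r$ over finitely supported multi-indices $r=(r_1,r_2,\dots)\in(\mathbb{Z}^+)^{(\mathbb{N})}$, $X^r=\prod_i X_i^{r_i}$. It is a Fréchet algebra under the topology of coordinatewise convergence (defined by the coefficient projections). $\mathbb{C}[[X]]$ is the algebra of formal power series in one indeterminate, with the topology of coordinatewise convergence. *)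

theory Defs
  imports "HOL-Library.Poly_Mapping" "HOL-Computational_Algebra.Formal_Power_Series"
begin

(* Formal power series in countably many indeterminates X_1, X_2, ... with complex
coefficients: arbitrary coefficient functions on finitely supported multi-indices
(nat \<Rightarrow>\<^sub>0 nat). Addition and scalar multiplication are pointwise; multiplication
is the Cauchy product (a finite sum, since each multi-index has finitely many
decompositions r = s + t). *)

type_synonym mps = "(nat \<Rightarrow>\<^sub>0 nat) \<Rightarrow> complex"

definition mps_add :: "mps \<Rightarrow> mps \<Rightarrow> mps" where
  "mps_add f g = (\<lambda>r. f r + g r)"

definition mps_smult :: "complex \<Rightarrow> mps \<Rightarrow> mps" where
  "mps_smult c f = (\<lambda>r. c * f r)"

definition mps_mult :: "mps \<Rightarrow> mps \<Rightarrow> mps" where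
  "mps_mult f g = (\<lambda>r. \<Sum>(s, t) \<in> {(s, t). s + t = r}. f s * g t)"

definition mps_alg_hom :: "(mps \<Rightarrow> complex fps) \<Rightarrow> bool" where
  "mps_alg_hom \<phi> \<longleftrightarrow>
     (\<forall>f g. \<phi> (mps_add f g) = \<phi> f + \<phi> g) \<and>
     (\<forall>c f. \<phi> (mps_smult c f) = fps_const c * \<phi> f) \<and>
     (\<forall>f g. \<phi> (mps_mult f g) = \<phi> f * \<phi> g)"

end

theory Submission
  imports Defs
begin

unbundle fps_syntax

abbreviation lk :: "(nat \<Rightarrow>\<^sub>0 nat) \<Rightarrow> nat \<Rightarrow> nat" where "lk \<equiv> Poly_Mapping.lookup"

lemma decomp_finite: "finite {(s, t). s + t = (r::nat \<Rightarrow>\<^sub>0 nat)}"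
proof -
  let ?K = "Poly_Mapping.keys r"
  let ?B = "{..sum (lk r) ?K}"
  let ?F = "{f. \<forall>x. (x \<in> ?K \<longrightarrow> f x \<in> ?B) \<and> (x \<notin> ?K \<longrightarrow> f x = 0)}"
  have fin: "finite ?F"
    by (rule finite_set_of_finite_funs) auto
  have mem: "lk s \<in> ?F" if st: "s + t = r" for s t
  proof -
    have le: "lk s x \<le> lk r x" for x using st by (auto simp add: lookup_add)
    have "lk s x \<in> ?B" if "x \<in> ?K" for x
    proof -
      have "lk r x \<le> sum (lk r) ?K" using that by (intro member_le_sum) auto
      then show ?thesis using le[of x] by auto
    qed
    moreover have "lk s x = 0" if "x \<notin> ?K" for x using le[of x] that by (simp add: in_keys_iff)
    ultimately show ?thesis by blast
  qed
  have sub: "lk ` fst ` {(s, t). s + t = r} \<subseteq> ?F" using mem by auto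
  have "finite (lk ` fst ` {(s, t). s + t = r})" using finite_subset[OF sub fin] .
  then have f1: "finite (fst ` {(s, t). s + t = r})"
    by (rule finite_imageD) (auto intro!: inj_onI simp: Poly_Mapping.lookup_inject)
  have "inj_on fst {(s, t). s + t = r}"
    by (rule inj_onI) auto
  then show ?thesis using f1 finite_imageD by blast
qed

definition iota :: "nat \<Rightarrow> complex fps \<Rightarrow> mps" where
  "iota j G = (\<lambda>r. if r = Poly_Mapping.single j (lk r j) then G $ lk r j else 0)"

lemma iota_single [simp]: "iota j G (Poly_Mapping.single j n) = G $ n"
  by (simp add: iota_def)

lemma iota_nz: "iota j G r \<noteq> 0 \<Longrightarrow> r = Poly_Mapping.single j (lk r j)"
  by (simp add: iota_def split: if_splits)

lemma iota_add: "iota j (G + H) = mps_add (iota j G) (iota j H)"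
  by (auto simp: iota_def mps_add_def fun_eq_iff)

lemma iota_smult: "iota j (fps_const c * G) = mps_smult c (iota j G)"
  by (auto simp: iota_def mps_smult_def fun_eq_iff)

lemma iota_inj: "inj (iota j)"
proof (rule injI)
  fix G H assume "iota j G = iota j H"
  then have "iota j G (Poly_Mapping.single j n) = iota j H (Poly_Mapping.single j n)" for n by simp
  then show "G = H" by (simp add: fps_eq_iff)
qed

lemma iota_mult: "mps_mult (iota j G) (iota j H) = iota j (G * H)"
proof
  fix r :: "nat \<Rightarrow>\<^sub>0 nat"
  let ?D = "{(s, t). s + t = r}"
  let ?f = "\<lambda>(s, t). iota j G s * iota j H t"
  show "mps_mult (iota j G) (iota j H) r = iota j (G * H) r"
  proof (cases "r = Poly_Mapping.single j (lk r j)")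
    case True
    define n where "n = lk r j"
    have r: "r = Poly_Mapping.single j n" using True n_def by simp
    let ?g = "\<lambda>k. (Poly_Mapping.single j k, Poly_Mapping.single j (n - k))"
    have sub: "?g ` {0..n} \<subseteq> ?D" by (auto simp: r single_add[symmetric])
    have z: "iota j G s * iota j H t = 0" if st: "s + t = r" and nin: "(s, t) \<notin> ?g ` {0..n}" for s t
    proof (rule ccontr)
      assume nz: "iota j G s * iota j H t \<noteq> 0"
      then have s: "s = Poly_Mapping.single j (lk s j)" and t: "t = Poly_Mapping.single j (lk t j)"
        using iota_nz by auto
      have "lk s j + lk t j = n" using st r by (metis lookup_add lookup_single_eq)
      then have "(s, t) = ?g (lk s j)" using s t by (metis add_diff_cancel_left')
      moreover have "lk s j \<in> {0..n}" using \<open>lk s j + lk t j = n\<close> by auto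
      ultimately show False using nin by blast
    qed
    have zero: "\<forall>x \<in> ?D - ?g ` {0..n}. ?f x = 0" using z by auto
    have "mps_mult (iota j G) (iota j H) r = sum ?f ?D" by (simp add: mps_mult_def)
    also have "\<dots> = sum ?f (?g ` {0..n})"
      by (rule sum.mono_neutral_right[OF decomp_finite sub zero])
    also have "\<dots> = sum (?f \<circ> ?g) {0..n}"
      by (rule sum.reindex) (rule inj_onI, metis lookup_single_eq prod.inject)
    also have "\<dots> = (G * H) $ n" by (simp add: fps_mult_nth)
    finally show ?thesis by (simp add: r)
  next
    case False
    have "sum ?f ?D = 0"
    proof (rule sum.neutral, clarify)
      fix s t assume st: "r = s + t"
      show "iota j G s * iota j H t = 0"
      proof (rule ccontr)
        assume "iota j G s * iota j H t \<noteq> 0"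
        then have s: "s = Poly_Mapping.single j (lk s j)" and t: "t = Poly_Mapping.single j (lk t j)"
          using iota_nz by auto
        then have "r = Poly_Mapping.single j (lk s j + lk t j)" using st by (metis single_add)
        then show False using False by (metis lookup_single_eq)
      qed
    qed
    then show ?thesis using False by (simp add: mps_mult_def iota_def)
  qed
qed

lemma iota_mult2:
  assumes "j \<noteq> l"
  shows "mps_mult (iota j G) (iota l H) (Poly_Mapping.single j k + Poly_Mapping.single l m) = G $ k * H $ m"
proof -
  let ?r = "Poly_Mapping.single j k + Poly_Mapping.single l m"
  let ?D = "{(s, t). s + t = ?r}"
  let ?f = "\<lambda>(s, t). iota j G s * iota l H t"
  have sub: "{(Poly_Mapping.single j k, Poly_Mapping.single l m)} \<subseteq> ?D" by auto
  have z: "iota j G s * iota l H t = 0" if st: "s + t = ?r"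
    and nin: "(s, t) \<noteq> (Poly_Mapping.single j k, Poly_Mapping.single l m)" for s t
  proof (rule ccontr)
    assume nz: "iota j G s * iota l H t \<noteq> 0"
    then have s: "s = Poly_Mapping.single j (lk s j)" and t: "t = Poly_Mapping.single l (lk t l)"
      using iota_nz by auto
    have e1: "lk t j = 0" using t assms by (metis lookup_single_not_eq)
    have e2: "lk s l = 0" using s assms by (metis lookup_single_not_eq)
    have "lk s j + lk t j = lk ?r j" "lk s l + lk t l = lk ?r l" using st by (metis lookup_add)+
    then have "lk s j = k" "lk t l = m" using assms e1 e2 by (simp_all add: lookup_add lookup_single_not_eq)
    then show False using nin s t by auto
  qed
  have zero: "\<forall>x \<in> ?D - {(Poly_Mapping.single j k, Poly_Mapping.single l m)}. ?f x = 0"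
  proof
    fix x assume "x \<in> ?D - {(Poly_Mapping.single j k, Poly_Mapping.single l m)}"
    then obtain s t where "x = (s, t)" "s + t = ?r" "(s, t) \<noteq> (Poly_Mapping.single j k, Poly_Mapping.single l m)"
      by auto
    then show "?f x = 0" using z[of s t] by simp
  qed
  have "mps_mult (iota j G) (iota l H) ?r = sum ?f ?D" by (simp add: mps_mult_def)
  also have "\<dots> = sum ?f {(Poly_Mapping.single j k, Poly_Mapping.single l m)}"
    by (rule sum.mono_neutral_right[OF decomp_finite sub zero])
  finally show ?thesis by simp
qed


lemma lin_dep:
  fixes v :: "nat \<Rightarrow> nat \<Rightarrow> 'a::idom"
  assumes "finite I" "card I > n"
  shows "\<exists>c. (\<exists>i\<in>I. c i \<noteq> 0) \<and> (\<forall>j<n. (\<Sum>i\<in>I. c i * v i j) = 0)"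
  using assms
proof (induction n arbitrary: I v)
  case 0
  then have "I \<noteq> {}" by auto
  then show ?case by (intro exI[of _ "\<lambda>_. 1"]) auto
next
  case (Suc n)
  show ?case
  proof (cases "\<forall>i\<in>I. v i n = 0")
    case True
    obtain c where c: "\<exists>i\<in>I. c i \<noteq> 0" "\<forall>j<n. (\<Sum>i\<in>I. c i * v i j) = 0"
      using Suc.IH[of I v] Suc.prems by auto
    have "\<forall>j<Suc n. (\<Sum>i\<in>I. c i * v i j) = 0"
    proof (intro allI impI)
      fix j assume "j < Suc n"
      then consider "j < n" | "j = n" by linarith
      then show "(\<Sum>i\<in>I. c i * v i j) = 0"
        by cases (use c True in auto)
    qed
    then show ?thesis using c by blast
  next
    case False
    then obtain k where k: "k \<in> I" "v k n \<noteq> 0" by auto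
    define w where "w i j = v k n * v i j - v i n * v k j" for i j
    have fin': "finite (I - {k})" using Suc.prems by auto
    have card': "card (I - {k}) > n" using Suc.prems k by auto
    obtain c' where c': "\<exists>i\<in>I - {k}. c' i \<noteq> 0" "\<forall>j<n. (\<Sum>i\<in>I - {k}. c' i * w i j) = 0"
      using Suc.IH[OF fin' card', of w] by auto
    define c where "c i = (if i = k then - (\<Sum>i\<in>I - {k}. c' i * v i n) else c' i * v k n)" for i
    have sumeq: "(\<Sum>i\<in>I. c i * v i j) = (\<Sum>i\<in>I - {k}. c' i * w i j)" for j
    proof -
      have "(\<Sum>i\<in>I. c i * v i j) = c k * v k j + (\<Sum>i\<in>I - {k}. c i * v i j)"
        using Suc.prems(1) k(1) by (simp add: sum.remove)
      also have "(\<Sum>i\<in>I - {k}. c i * v i j) = (\<Sum>i\<in>I - {k}. c' i * v k n * v i j)"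
        by (rule sum.cong) (auto simp: c_def)
      also have "c k * v k j = - (\<Sum>i\<in>I - {k}. c' i * v i n * v k j)"
        by (simp add: c_def sum_distrib_right)
      finally show ?thesis
        by (simp add: w_def algebra_simps sum_subtractf)
    qed
    have "\<forall>j<Suc n. (\<Sum>i\<in>I. c i * v i j) = 0"
    proof (intro allI impI)
      fix j assume "j < Suc n"
      then consider "j < n" | "j = n" by linarith
      then show "(\<Sum>i\<in>I. c i * v i j) = 0"
        by cases (use c' in \<open>auto simp: sumeq w_def\<close>)
    qed
    moreover have "\<exists>i\<in>I. c i \<noteq> 0"
    proof -
      obtain i where "i \<in> I - {k}" "c' i \<noteq> 0" using c' by auto
      then show ?thesis using k by (intro bexI[of _ i]) (auto simp: c_def)
    qed
    ultimately show ?thesis by blast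
  qed
qed

lemma onevar:
  fixes \<chi> :: "complex fps \<Rightarrow> complex fps"
  assumes add: "\<And>G H. \<chi> (G + H) = \<chi> G + \<chi> H"
    and sm: "\<And>c G. \<chi> (fps_const c * G) = fps_const c * \<chi> G"
    and mu: "\<And>G H. \<chi> (G * H) = \<chi> G * \<chi> H"
    and inj: "inj \<chi>"
  shows "\<chi> fps_X $ 0 = 0" "\<And>G. \<chi> G = G oo \<chi> fps_X"
proof -
  have z: "\<chi> 0 = 0" using sm[of 0 0] by simp
  have one: "\<chi> 1 = 1"
  proof -
    have "\<chi> 1 * \<chi> 1 = \<chi> 1" using mu[of 1 1] by simp
    then have "\<chi> 1 * (\<chi> 1 - 1) = 0" by (simp add: algebra_simps)
    then have "\<chi> 1 = 0 \<or> \<chi> 1 = 1" by auto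
    moreover have "\<chi> 1 \<noteq> 0"
    proof
      assume "\<chi> 1 = 0"
      then have "\<chi> 1 = \<chi> 0" using z by simp
      then show False using inj by (auto dest: injD)
    qed
    ultimately show ?thesis by blast
  qed
  have cst: "\<chi> (fps_const c) = fps_const c" for c using sm[of c 1] one by simp
  have neg: "\<chi> (- G) = - \<chi> G" for G using add[of G "-G"] z by (metis neg_eq_iff_add_eq_0 add_0 ab_group_add_class.ab_left_minus)
  have diff: "\<chi> (G - H) = \<chi> G - \<chi> H" for G H using add[of G "-H"] neg[of H] by simp
  have pw: "\<chi> (fps_X ^ k) = \<chi> fps_X ^ k" for k by (induction k) (simp_all add: one mu)
  have sumh: "\<chi> (sum f A) = sum (\<lambda>i. \<chi> (f i)) A" for f and A :: "nat set"
    by (induction A rule: infinite_finite_induct) (simp_all add: z add)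
  let ?a = "\<chi> fps_X"
  show a0: "?a $ 0 = 0"
  proof (rule ccontr)
    assume l: "?a $ 0 \<noteq> 0"
    define U where "U = 1 - fps_const (1 / (?a $ 0)) * fps_X"
    have "U $ 0 \<noteq> 0" by (simp add: U_def)
    then have "inverse U * U = 1" by (rule inverse_mult_eq_1)
    then have "\<chi> (inverse U) * \<chi> U = 1" using mu one by metis
    then have "(\<chi> (inverse U) * \<chi> U) $ 0 = 1" by simp
    moreover have "\<chi> U $ 0 = 0" using l by (simp add: U_def diff one sm)
    ultimately show False by simp
  qed
  fix G
  show "\<chi> G = G oo ?a"
  proof (rule fps_ext)
    fix n
    define P where "P = (\<Sum>k\<le>n. fps_const (G $ k) * fps_X ^ k)"
    define R where "R = G - P"
    have Rn: "R $ i = 0" if "i \<le> n" for i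
    proof -
      have "P $ i = G $ i" using that by (simp add: P_def fps_sum_nth mult_delta_right)
      then show ?thesis by (simp add: R_def)
    qed
    have R: "R = fps_X ^ Suc n * fps_shift (Suc n) R"
      by (rule fps_ext, simp only: fps_X_power_mult_nth, auto simp: Rn)
    have "\<chi> G = \<chi> P + \<chi> R" using add[of P R] by (simp add: R_def)
    moreover have "\<chi> R $ n = 0"
    proof -
      have "\<chi> R = ?a ^ Suc n * \<chi> (fps_shift (Suc n) R)"
        by (subst R) (simp add: mu pw)
      moreover have "(?a ^ Suc n) $ i = 0" if "i \<le> n" for i
        using startsby_zero_power_prefix[OF a0, rule_format, of i "Suc n"] that by (simp del: power_Suc)
      ultimately show ?thesis by (simp add: fps_mult_nth)
    qed
    moreover have "\<chi> P = (\<Sum>k\<le>n. fps_const (G $ k) * ?a ^ k)"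
      by (simp add: P_def sumh sm pw)
    ultimately have "\<chi> G $ n = (\<Sum>k\<le>n. G $ k * (?a ^ k) $ n)" by (simp add: fps_sum_nth)
    also have "\<dots> = (G oo ?a) $ n" by (simp add: fps_compose_nth atLeast0AtMost)
    finally show "\<chi> G $ n = (G oo ?a) $ n" .
  qed
qed



lemma complex_root_ex:
  assumes "0 < p"
  shows "\<exists>r::complex. r ^ p = z"
proof -
  let ?r = "rcis (root p (cmod z)) (Arg z / real p)"
  have "?r ^ p = rcis (root p (cmod z) ^ p) (real p * (Arg z / real p))" by (rule DeMoivre2)
  also have "\<dots> = rcis (cmod z) (Arg z)" using assms by simp
  also have "\<dots> = z" by (rule rcis_cmod_Arg)
  finally show ?thesis by blast
qed

lemma fps_root_param:
  fixes a :: "complex fps"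
  assumes "a \<noteq> 0" "a $ 0 = 0"
  shows "\<exists>s. s $ 0 = 0 \<and> s $ 1 \<noteq> 0 \<and> s ^ subdegree a = a"
proof -
  define p where "p = subdegree a"
  have "p \<noteq> 0" using assms by (simp add: p_def subdegree_eq_0_iff)
  then obtain k where pk: "p = Suc k" by (cases p) auto
  define u where "u = unit_factor a"
  have a: "a = fps_X ^ p * u" unfolding u_def p_def by (rule fps_unit_factor_decompose')
  have u0: "u $ 0 \<noteq> 0" using assms(1) by (simp add: u_def fps_unit_factor_nth_0)
  obtain \<rho> where rho: "\<rho> ^ Suc k = u $ 0" using complex_root_ex[of "Suc k" "u $ 0"] by auto
  have rho0: "\<rho> \<noteq> 0" using rho u0 by auto
  define w where "w = fps_radical (\<lambda>_ _. \<rho>) (Suc k) u"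
  have wp: "w ^ Suc k = u" using power_radical[OF u0, of "\<lambda>_ _. \<rho>" k] rho by (simp add: w_def)
  define s where "s = fps_X * w"
  have "s $ 0 = 0" by (simp add: s_def)
  moreover have "s $ 1 \<noteq> 0" using rho0 by (simp add: s_def w_def)
  moreover have "s ^ p = a" using a wp pk by (simp add: s_def power_mult_distrib)
  ultimately show ?thesis unfolding p_def by blast
qed

definition Dp :: "nat \<Rightarrow> nat \<Rightarrow> complex fps \<Rightarrow> complex fps" where
  "Dp p j c = Abs_fps (\<lambda>n. c $ (n * p + j))"

lemma Xp_compose_nth:
  assumes "0 < p"
  shows "(G oo fps_X ^ p) $ m = (if p dvd m then G $ (m div p) else (0::complex))"
proof -
  have "(G oo fps_X ^ p) $ m = (\<Sum>i=0..m. G $ i * (if m = p * i then 1 else 0))"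
    by (simp add: fps_compose_nth power_mult[symmetric])
  also have "\<dots> = (\<Sum>i=0..m. if i = m div p \<and> p dvd m then G $ i else 0)"
    by (rule sum.cong) (use assms in auto)
  also have "\<dots> = (if p dvd m then G $ (m div p) else 0)"
  proof (cases "p dvd m")
    case True
    have "m div p \<le> m" by simp
    then show ?thesis using True by (simp add: sum.delta')
  qed simp
  finally show ?thesis .
qed

lemma Dp_mult:
  assumes p: "0 < p" and j: "j < p"
  shows "Dp p j ((G oo fps_X ^ p) * c) = G * Dp p j c"
proof (rule fps_ext)
  fix n
  let ?E = "G oo fps_X ^ p"
  let ?f = "\<lambda>m. ?E $ m * c $ (n * p + j - m)"
  have fin: "finite {0..n * p + j}" by simp
  have sub: "(\<lambda>k. k * p) ` {0..n} \<subseteq> {0..n * p + j}"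
  proof (rule image_subsetI)
    fix k assume "k \<in> {0..n}"
    then have "k * p \<le> n * p" by simp
    then have "k * p \<le> n * p + j" by (rule trans_le_add1)
    then show "k * p \<in> {0..n * p + j}" by (simp only: atLeastAtMost_iff) simp
  qed
  have zero: "\<forall>m \<in> {0..n * p + j} - (\<lambda>k. k * p) ` {0..n}. ?f m = 0"
  proof
    fix m assume m: "m \<in> {0..n * p + j} - (\<lambda>k. k * p) ` {0..n}"
    show "?f m = 0"
    proof (cases "p dvd m")
      case True
      then obtain q where q: "m = q * p" by (metis dvd_def mult.commute)
      have "q * p < Suc n * p" using m q j by auto
      then have "q \<le> n" by (metis less_Suc_eq_le mult_less_cancel2)
      then show ?thesis using m q by auto
    next
      case False
      then show ?thesis using p by (simp add: Xp_compose_nth)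
    qed
  qed
  have "Dp p j (?E * c) $ n = (\<Sum>m=0..n * p + j. ?f m)" by (simp add: Dp_def fps_mult_nth)
  also have "\<dots> = (\<Sum>m\<in>(\<lambda>k. k * p) ` {0..n}. ?f m)"
    by (rule sum.mono_neutral_right[OF fin sub zero])
  also have "\<dots> = (\<Sum>k=0..n. ?f (k * p))"
    by (rule sum.reindex_cong[where l = "\<lambda>k. k * p"]) (use p in \<open>auto intro!: inj_onI\<close>)
  also have "\<dots> = (\<Sum>k=0..n. G $ k * c $ ((n - k) * p + j))"
  proof (rule sum.cong)
    fix k assume "k \<in> {0..n}"
    then have "n * p + j - k * p = (n - k) * p + j"
      by (simp add: diff_mult_distrib)
    then show "?f (k * p) = G $ k * c $ ((n - k) * p + j)" using p by (simp add: Xp_compose_nth)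
  qed simp
  also have "\<dots> = (G * Dp p j c) $ n" by (simp add: Dp_def fps_mult_nth)
  finally show "Dp p j (?E * c) $ n = (G * Dp p j c) $ n" .
qed

lemma Dp_sum: "Dp p j (sum f A) = sum (\<lambda>i. Dp p j (f i)) A"
  by (rule fps_ext) (simp add: Dp_def fps_sum_nth)

lemma Dp_zero:
  assumes "0 < p" "\<forall>j<p. Dp p j c = 0"
  shows "c = 0"
proof (rule fps_ext)
  fix m
  have "c $ m = Dp p (m mod p) c $ (m div p)" by (simp add: Dp_def)
  then show "c $ m = 0 $ m" using assms by simp
qed



lemma phi_zero:
  assumes "mps_alg_hom \<phi>"
  shows "\<phi> (\<lambda>r. 0) = 0"
proof -
  have "mps_add (\<lambda>r. 0) (\<lambda>r. 0) = (\<lambda>r. 0)" by (simp add: mps_add_def)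
  then have "\<phi> (\<lambda>r. 0) = \<phi> (\<lambda>r. 0) + \<phi> (\<lambda>r. 0)" using assms unfolding mps_alg_hom_def by metis
  then show ?thesis by simp
qed

lemma phi_sum:
  assumes "mps_alg_hom \<phi>"
  shows "\<phi> (\<lambda>r. \<Sum>i\<in>A. f i r) = (\<Sum>i\<in>A. \<phi> (f i))"
proof (induction A rule: infinite_finite_induct)
  case (infinite A)
  then show ?case using phi_zero[OF assms] by simp
next
  case empty
  then show ?case using phi_zero[OF assms] by simp
next
  case (insert x F)
  have "(\<lambda>r. \<Sum>i\<in>insert x F. f i r) = mps_add (f x) (\<lambda>r. \<Sum>i\<in>F. f i r)"
    using insert by (simp add: mps_add_def)
  then show ?case using insert assms unfolding mps_alg_hom_def by simp
qed

theorem theorem1p1: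
  shows "\<not> (\<exists>\<phi> :: mps \<Rightarrow> complex fps. mps_alg_hom \<phi> \<and> inj \<phi>)"
proof
  assume "\<exists>\<phi> :: mps \<Rightarrow> complex fps. mps_alg_hom \<phi> \<and> inj \<phi>"
  then obtain \<phi> :: "mps \<Rightarrow> complex fps" where hom: "mps_alg_hom \<phi>" and inj: "inj \<phi>" by blast
  have padd: "\<phi> (mps_add f g) = \<phi> f + \<phi> g" for f g using hom by (simp add: mps_alg_hom_def)
  have psm: "\<phi> (mps_smult c f) = fps_const c * \<phi> f" for c f using hom by (simp add: mps_alg_hom_def)
  have pmu: "\<phi> (mps_mult f g) = \<phi> f * \<phi> g" for f g using hom by (simp add: mps_alg_hom_def)
  define \<chi> where "\<chi> j G = \<phi> (iota j G)" for j G
  have chi: "\<chi> j fps_X $ 0 = 0 \<and> (\<forall>G. \<chi> j G = G oo \<chi> j fps_X)" for j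
  proof -
    have hi: "inj (\<chi> j)" unfolding \<chi>_def using inj_compose[OF inj iota_inj[of j]] by (simp add: comp_def)
    have h1: "\<chi> j (G + H) = \<chi> j G + \<chi> j H" for G H unfolding \<chi>_def iota_add padd ..
    have h2: "\<chi> j (fps_const c * G) = fps_const c * \<chi> j G" for c G unfolding \<chi>_def iota_smult psm ..
    have h3: "\<chi> j (G * H) = \<chi> j G * \<chi> j H" for G H
      unfolding \<chi>_def iota_mult[symmetric] pmu ..
    note o = onevar[of "\<chi> j", OF h1 h2 h3 hi]
    show ?thesis by (intro conjI allI o)
  qed
  define a where "a = \<chi> 1 fps_X"
  define a2 where "a2 = \<chi> 2 fps_X"
  have a0: "a $ 0 = 0" and chi1: "\<And>G. \<phi> (iota 1 G) = G oo a"
    using chi[of 1] unfolding a_def[symmetric] unfolding \<chi>_def by blast+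
  have a20: "a2 $ 0 = 0" and chi2: "\<And>G. \<phi> (iota 2 G) = G oo a2"
    using chi[of 2] unfolding a2_def[symmetric] unfolding \<chi>_def by blast+
  have anz: "a \<noteq> 0"
  proof
    assume "a = 0"
    then have "\<phi> (iota 1 fps_X) = \<phi> (iota 1 0)" using chi1[of 0] chi1[of fps_X] by simp
    then have "iota 1 fps_X = iota 1 0" using inj by (auto dest: injD)
    then have "(fps_X :: complex fps) = 0" using injD[OF iota_inj] by blast
    then show False by simp
  qed
  define p where "p = subdegree a"
  have p0: "0 < p" using anz a0 subdegree_eq_0_iff[of a] by (simp add: p_def)
  obtain s where s0: "s $ 0 = 0" and s1: "s $ 1 \<noteq> 0" and sp: "s ^ p = a"
    using fps_root_param[OF anz a0] by (auto simp: p_def)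
  define S where "S = fps_inv s"
  have S0: "S $ 0 = 0" by (simp add: S_def fps_inv_def)
  have sS: "s oo S = fps_X" using fps_inv_right[OF s0 s1] by (simp add: S_def)
  have Ss: "S oo s = fps_X" using fps_inv[OF s0 s1] by (simp add: S_def)
  have aS: "a oo S = fps_X ^ p"
    using fps_compose_power[OF S0, of s p] sS sp by simp
  define b where "b = a2 oo S"
  have b0: "b $ 0 = 0" using a20 by (simp add: b_def)
  define I where "I = {0..p}"
  obtain Gc where Gnz: "\<exists>i\<in>I. Gc i \<noteq> 0"
    and Grel: "\<forall>j<p. (\<Sum>i\<in>I. Gc i * Dp p j (b ^ i)) = 0"
    using lin_dep[of I p "\<lambda>i j. Dp p j (b ^ i)"] by (auto simp: I_def)
  define c where "c = (\<Sum>i\<in>I. (Gc i oo fps_X ^ p) * b ^ i)"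
  have "Dp p j c = 0" if "j < p" for j
    using Grel that p0 by (simp add: c_def Dp_sum Dp_mult)
  then have c0: "c = 0" using Dp_zero[OF p0] by blast
  define F where "F = (\<lambda>r. \<Sum>i\<in>I. mps_mult (iota 1 (Gc i)) (iota 2 (fps_X ^ i)) r)"
  have "\<phi> F = (\<Sum>i\<in>I. (Gc i oo a) * (fps_X ^ i oo a2))"
    unfolding F_def phi_sum[OF hom] pmu chi1 chi2 ..
  then have "\<phi> F oo S = (\<Sum>i\<in>I. ((Gc i oo a) oo S) * ((fps_X ^ i oo a2) oo S))"
    by (simp add: fps_compose_sum_distrib fps_compose_mult_distrib[OF S0])
  also have "\<dots> = c"
  proof -
    have "(Gc i oo a) oo S = Gc i oo fps_X ^ p" for i
      using fps_compose_assoc[OF S0 a0, of "Gc i"] aS by simp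
    moreover have "(fps_X ^ i oo a2) oo S = b ^ i" for i
      using fps_compose_assoc[OF S0 a20, of "fps_X ^ i"] fps_X_power_compose[OF b0, of i]
      by (simp add: b_def)
    ultimately show ?thesis by (simp add: c_def)
  qed
  finally have "\<phi> F oo S = 0" using c0 by simp
  then have "\<phi> F = 0"
    using fps_compose_assoc[OF s0 S0, of "\<phi> F"] Ss by simp
  then have "\<phi> F = \<phi> (\<lambda>r. 0)" using phi_zero[OF hom] by simp
  then have F0: "F = (\<lambda>r. 0)" using inj by (auto dest: injD)
  obtain i0 where i0: "i0 \<in> I" "Gc i0 \<noteq> 0" using Gnz by blast
  define k0 where "k0 = subdegree (Gc i0)"
  have k0: "Gc i0 $ k0 \<noteq> 0" using i0 by (simp add: k0_def)
  have "F (Poly_Mapping.single 1 k0 + Poly_Mapping.single 2 i0) = (\<Sum>i\<in>I. Gc i $ k0 * (fps_X ^ i :: complex fps) $ i0)"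
    by (simp add: F_def iota_mult2)
  also have "\<dots> = Gc i0 $ k0"
    using i0(1) by (simp add: mult_delta_right I_def)
  finally show False using F0 k0 by simp
qed

end
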